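(* Let $\sigma$ be the sign function on $\mathbb{R}$ (with $\sigma(0)=0$). For $\varepsilon>0$ and $\Phi\in\mathscr{C}_c^\infty(\mathbb{R}^2)$ define $$Kir_\varepsilon\Phi(x)=\big(\varepsilon\sigma(x)\mathcal{X}_{\{|x|\le\varepsilon\}}(x)+x\mathcal{X}_{\{|x|>\varepsilon\}}(x)\big)\int_{\{y:|x-y|>\varepsilon\}}\Phi(x,y)\frac{dy}{x-y},$$ which is the Kirchhoff divergence of $\Phi$ with respect to the distribution $T_\varepsilon$ induced by the function $h^\varepsilon(x)=\frac1x\mathcal{X}_{\{|x|>\varepsilon\}}(x)+\frac{\sigma(x)}{\varepsilon}\mathcal{X}_{[-\varepsilon,\varepsilon]}(x)$ and $\langle\!\langle S_\varepsilon,\Theta\rangle\!\rangle=\iint_{\{|x-y|>\varepsilon\}}\frac{\Theta(x,y)}{x-y}\,dx\,dy$. Then: (i) $Kir_\varepsilon\Phi(x)\to xH_y\Phi(x,x)$ as $\varepsilon\to0$, for every $x\in\mathbb{R}$; (ii) for $T=\mathrm{p.v.}\frac1x$ and $\langle\!\langle S,\Theta\rangle\!\rangle=\int_{\mathbb{R}}H_y\Theta(x,x)\,dx$, $\Theta\in\mathscr{C}_c^\infty(\mathbb{R}^2)$, the function $\psi(x)=xH_y\Phi(x,x)$ is the Kirchhoff divergence: $\langle T,\varphi\psi\rangle=\langle\!\langle S,\varphi\Phi\rangle\!\rangle$ for every $\varphi\in\mathscr{C}_c^\infty(\mathbb{R})$.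
   Context: $\langle\mathrm{p.v.}\frac1x,\varphi\rangle=\lim_{\varepsilon\to0}\int_{|x|>\varepsilon}\frac{\varphi(x)}{x}dx$. For a function $\Theta(x,y)$, $H_y\Theta(x,z)=\lim_{\varepsilon\to0}\int_{|z-y|>\varepsilon}\frac{\Theta(x,y)}{z-y}dy$ is the Hilbert transform of $y\mapsto\Theta(x,y)$ evaluated at $z$. $(\varphi\Phi)(x,y)=\varphi(x)\Phi(x,y)$. *)

theory Defs
  imports "HOL-Analysis.Analysis"
begin

fun Ck :: "nat \<Rightarrow> ('a::euclidean_space \<Rightarrow> real) \<Rightarrow> bool" where
  "Ck 0 f = continuous_on UNIV f"
| "Ck (Suc k) f = (continuous_on UNIV f \<and> (\<exists>f'. (\<forall>x. (f has_derivative f' x) (at x)) \<and>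
      (\<forall>v. Ck k (\<lambda>x. f' x v))))"

definition smooth :: "('a::euclidean_space \<Rightarrow> real) \<Rightarrow> bool" where
  "smooth f \<longleftrightarrow> (\<forall>k. Ck k f)"

definition compact_support :: "('a::euclidean_space \<Rightarrow> real) \<Rightarrow> bool" where
  "compact_support f \<longleftrightarrow> compact (closure {x. f x \<noteq> 0})"

definition test_fun :: "('a::euclidean_space \<Rightarrow> real) \<Rightarrow> bool" where
  "test_fun f \<longleftrightarrow> smooth f \<and> compact_support f"

definition pv_recip :: "(real \<Rightarrow> real) \<Rightarrow> real" where
  "pv_recip \<phi> = Lim (at_right 0) (\<lambda>\<epsilon>. integral {x. \<epsilon> < \<bar>x\<bar>} (\<lambda>x. \<phi> x / x))"

definition hilbert_y :: "(real \<times> real \<Rightarrow> real) \<Rightarrow> real \<Rightarrow> real \<Rightarrow> real" where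
  "hilbert_y \<Theta> x z = Lim (at_right 0) (\<lambda>\<epsilon>. integral {y. \<epsilon> < \<bar>z - y\<bar>} (\<lambda>y. \<Theta> (x, y) / (z - y)))"

definition S_pair :: "(real \<times> real \<Rightarrow> real) \<Rightarrow> real" where
  "S_pair \<Theta> = integral UNIV (\<lambda>x. hilbert_y \<Theta> x x)"

definition h_eps :: "real \<Rightarrow> real \<Rightarrow> real" where
  "h_eps \<epsilon> x = (1 / x) * indicator {x. \<bar>x\<bar> > \<epsilon>} x + (sgn x / \<epsilon>) * indicator {-\<epsilon>..\<epsilon>} x"

definition T_eps :: "real \<Rightarrow> (real \<Rightarrow> real) \<Rightarrow> real" where
  "T_eps \<epsilon> \<phi> = integral UNIV (\<lambda>x. h_eps \<epsilon> x * \<phi> x)"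

definition S_eps :: "real \<Rightarrow> (real \<times> real \<Rightarrow> real) \<Rightarrow> real" where
  "S_eps \<epsilon> \<Theta> = integral {p. \<epsilon> < \<bar>fst p - snd p\<bar>} (\<lambda>p. \<Theta> p / (fst p - snd p))"

definition Kir_eps :: "real \<Rightarrow> (real \<times> real \<Rightarrow> real) \<Rightarrow> real \<Rightarrow> real" where
  "Kir_eps \<epsilon> \<Phi> x =
     (\<epsilon> * sgn x * indicator {x. \<bar>x\<bar> \<le> \<epsilon>} x + x * indicator {x. \<bar>x\<bar> > \<epsilon>} x)
     * integral {y. \<epsilon> < \<bar>x - y\<bar>} (\<lambda>y. \<Phi> (x, y) / (x - y))"

end

theory Submission
  imports Defs
begin


lemma test_fun_cont:
  fixes f :: "'a::euclidean_space \<Rightarrow> real"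
  assumes "test_fun f" shows "continuous_on UNIV f"
proof -
  have "Ck 0 f" using assms unfolding test_fun_def smooth_def by blast
  then show ?thesis by simp
qed

lemma test_fun_supp:
  fixes f :: "'a::euclidean_space \<Rightarrow> real"
  assumes "test_fun f" shows "\<exists>R>0. \<forall>p. f p \<noteq> 0 \<longrightarrow> norm p \<le> R"
proof -
  have "compact (closure {x. f x \<noteq> 0})" using assms unfolding test_fun_def compact_support_def by blast
  then have "bounded (closure {x. f x \<noteq> 0})" by (rule compact_imp_bounded)
  then obtain R where R: "\<forall>p\<in>closure {x. f x \<noteq> 0}. norm p \<le> R" by (meson bounded_iff)
  have "\<forall>p. f p \<noteq> 0 \<longrightarrow> norm p \<le> max R 1"
  proof (intro allI impI)
    fix p assume "f p \<noteq> 0"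
    then have "p \<in> closure {x. f x \<noteq> 0}" by (simp add: closure_def)
    then have "norm p \<le> R" using R by (rule bspec[rotated])
    then show "norm p \<le> max R 1" by linarith
  qed
  moreover have "max R 1 > 0" by linarith
  ultimately show ?thesis by blast
qed

lemma test_fun_bdd:
  fixes f :: "'a::euclidean_space \<Rightarrow> real"
  assumes "test_fun f" shows "\<exists>M. \<forall>p. \<bar>f p\<bar> \<le> M"
proof -
  obtain R where R0: "R > 0" and R: "\<forall>p. f p \<noteq> 0 \<longrightarrow> norm p \<le> R" using test_fun_supp[OF assms] by blast
  have "compact (f ` cball 0 R)"
    by (rule compact_continuous_image[OF continuous_on_subset[OF test_fun_cont[OF assms] subset_UNIV] compact_cball])
  from compact_imp_bounded[OF this] obtain M where M: "\<forall>y\<in>f ` cball 0 R. norm y \<le> M"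
    unfolding bounded_iff by blast
  have "f 0 \<in> f ` cball 0 R" using R0 by simp
  then have "norm (f 0) \<le> M" using M by blast
  then have M0: "0 \<le> M" by (meson norm_ge_zero order_trans)
  show ?thesis
  proof (intro exI allI)
    fix p show "\<bar>f p\<bar> \<le> M"
    proof (cases "f p = 0")
      case True then show ?thesis using M0 by simp
    next
      case False then have "p \<in> cball 0 R" using R by simp
      then show ?thesis using M by auto
    qed
  qed
qed

lemma int_bounded:
  fixes f :: "'a::euclidean_space \<Rightarrow> real"
  assumes "f \<in> borel_measurable lborel" "\<And>x. \<bar>f x\<bar> \<le> B" "\<And>x. f x \<noteq> 0 \<Longrightarrow> norm x \<le> R"
  shows "integrable lborel f"
  apply (rule integrableI_bounded_set[where A="cball 0 R" and B=B])
  using assms emeasure_bounded_finite[OF bounded_cball, of 0 R] by auto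

lemma abs_int_ind_bound:
  fixes f :: "real \<Rightarrow> real"
  assumes "\<And>t. \<bar>f t\<bar> \<le> L * indicator {-a..a} t" "0 \<le> a"
  shows "\<bar>integral\<^sup>L lborel f\<bar> \<le> 2 * a * L"
proof -
  have L: "0 \<le> L" using assms(1)[of 0] assms(2) by auto
  show ?thesis
  proof (cases "integrable lborel f")
    case True
    have "\<bar>integral\<^sup>L lborel f\<bar> \<le> (\<integral>t. \<bar>f t\<bar> \<partial>lborel)"
      using integral_norm_bound[of lborel f] by simp
    also have "\<dots> \<le> (\<integral>t. L * indicator {-a..a} t \<partial>lborel)"
      apply (rule integral_mono)
      using True assms by (auto intro!: integrable_mult_right)
    also have "\<dots> = L * (2*a)"
      using assms(2) by simp
    finally show ?thesis by (simp add: mult_ac)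
  next
    case False
    then show ?thesis using L assms(2) by (simp add: not_integrable_integral_eq)
  qed
qed

lemma partial_deriv:
  fixes f' :: "real \<times> real \<Rightarrow> real \<times> real \<Rightarrow> real" and \<Phi> :: "real \<times> real \<Rightarrow> real"
  assumes d: "\<forall>p. (\<Phi> has_derivative f' p) (at p)"
  shows "((\<lambda>y. \<Phi>(x,y)) has_real_derivative f' (x,y) (0,1)) (at y)"
proof -
  have "((\<lambda>y. (x,y)) has_derivative (\<lambda>h. (0,h))) (at y)"
    by (intro has_derivative_Pair has_derivative_const has_derivative_ident)
  from has_derivative_compose[OF this d[rule_format]]
  have 1: "((\<lambda>y. \<Phi>(x,y)) has_derivative (\<lambda>h. f' (x,y) (0,h))) (at y)" by simp
  have bl: "bounded_linear (f' (x,y))" using d has_derivative_bounded_linear by blast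
  have "(\<lambda>h. f' (x,y) (0,h)) = (\<lambda>h. f' (x,y) (0,1) * h)"
  proof
    fix h :: real
    have "f' (x,y) (0,h) = f' (x,y) (h *\<^sub>R (0,1))" by simp
    also have "\<dots> = h *\<^sub>R f' (x,y) (0,1)" using bl by (rule linear_simps(5))
    finally show "f' (x,y) (0,h) = f' (x,y) (0,1) * h" by simp
  qed
  with 1 show ?thesis by (simp add: has_field_derivative_def)
qed

lemma lip_y:
  fixes \<Phi> :: "real \<times> real \<Rightarrow> real"
  assumes d: "\<And>x y. ((\<lambda>y. \<Phi>(x,y)) has_real_derivative g (x,y)) (at y)"
    and gc: "continuous_on UNIV g"
    and R: "\<forall>p. \<Phi> p \<noteq> 0 \<longrightarrow> norm p \<le> R"
  shows "\<exists>L\<ge>0. \<forall>x y z. \<bar>\<Phi>(x,y) - \<Phi>(x,z)\<bar> \<le> L * \<bar>y - z\<bar>"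
proof -
  have nz: "\<bar>x\<bar> \<le> R \<and> \<bar>y\<bar> \<le> R" if "\<Phi>(x,y) \<noteq> 0" for x y
  proof -
    have "norm (x,y) \<le> R" using R that by blast
    moreover have "\<bar>x\<bar> \<le> norm (x,y)" "\<bar>y\<bar> \<le> norm (x,y)"
      using norm_fst_le[of x y] norm_snd_le[of y x] by auto
    ultimately show ?thesis by linarith
  qed
  have gz0: "g(x,y) = 0" if oS: "open S" and yS: "y \<in> S" and z: "\<And>y'. y' \<in> S \<Longrightarrow> \<Phi>(x,y') = 0" for x y S
  proof -
    have "((\<lambda>_. 0) has_real_derivative g (x,y)) (at y)"
      using d[of x y] oS yS z unfolding has_field_derivative_def
      by (rule has_derivative_transform_within_open) blast
    moreover have "((\<lambda>_. 0) has_real_derivative 0) (at y)" by (rule DERIV_const)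
    ultimately show ?thesis by (rule DERIV_unique)
  qed
  have gz: "g(x,y) = 0" if "R < \<bar>x\<bar> \<or> R < \<bar>y\<bar>" for x y
  proof (cases "R < \<bar>x\<bar>")
    case True
    show ?thesis
    proof (rule gz0[of UNIV])
      fix y' show "\<Phi>(x,y') = 0" using nz[of x y'] True by linarith
    qed auto
  next
    case False
    then have yR: "R < \<bar>y\<bar>" using that by blast
    have o: "open {y'::real. R < \<bar>y'\<bar>}"
    proof -
      have "{y'::real. R < \<bar>y'\<bar>} = {..<-R} \<union> {R<..}" by auto
      then show ?thesis by (simp add: open_Un)
    qed
    show ?thesis
    proof (rule gz0[OF o])
      fix y' assume "y' \<in> {y'. R < \<bar>y'\<bar>}"
      then show "\<Phi>(x,y') = 0" using nz[of x y'] by force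
    qed (use yR in blast)
  qed
  have "compact (g ` cbox (-R,-R) (R,R))"
    by (rule compact_continuous_image[OF continuous_on_subset[OF gc subset_UNIV] compact_cbox])
  from compact_imp_bounded[OF this] obtain L where L: "\<forall>y\<in>g ` cbox (-R,-R) (R,R). norm y \<le> L"
    by (meson bounded_iff)
  have gb: "\<bar>g p\<bar> \<le> max L 0" for p
  proof (cases p)
    case (Pair x y)
    show ?thesis
    proof (cases "\<bar>x\<bar> \<le> R \<and> \<bar>y\<bar> \<le> R")
      case True
      then have "x \<in> cbox (-R) R" "y \<in> cbox (-R) R" by auto
      then have "(x,y) \<in> cbox (-R) R \<times> cbox (-R) R" by blast
      then have "p \<in> cbox (-R,-R) (R,R)" unfolding Pair cbox_Pair_eq .
      then have "g p \<in> g ` cbox (-R,-R) (R,R)" by (rule imageI)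
      then have "norm (g p) \<le> L" using L by blast
      then show ?thesis by simp
    next
      case False
      then have "g(x,y) = 0" by (intro gz) linarith
      then show ?thesis unfolding Pair by simp
    qed
  qed
  have main: "\<bar>\<Phi>(x,z) - \<Phi>(x,y)\<bar> \<le> max L 0 * (z - y)" if yz: "y < z" for x y z
  proof -
    obtain \<xi> where "\<Phi>(x,z) - \<Phi>(x,y) = (z - y) * g (x,\<xi>)"
      using MVT2[OF yz, of "\<lambda>y. \<Phi>(x,y)" "\<lambda>t. g(x,t)"] d by blast
    then have "\<bar>\<Phi>(x,z) - \<Phi>(x,y)\<bar> = (z - y) * \<bar>g (x,\<xi>)\<bar>" using yz by (simp add: abs_mult)
    also have "\<dots> \<le> (z - y) * max L 0" using gb yz by (intro mult_left_mono) auto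
    finally show ?thesis by (simp add: mult_ac)
  qed
  have "\<bar>\<Phi>(x,y) - \<Phi>(x,z)\<bar> \<le> max L 0 * \<bar>y - z\<bar>" for x y z
  proof -
    consider "y < z" | "z < y" | "y = z" by linarith
    then show ?thesis
    proof cases
      case 1 then show ?thesis using main[OF 1, of x] by (simp add: abs_minus_commute)
    next
      case 2 then show ?thesis using main[OF 2, of x] by simp
    qed simp
  qed
  then show ?thesis by (intro exI[of _ "max L 0"]) auto
qed
lemma trunc_tendsto:
  fixes f :: "real \<Rightarrow> real"
  assumes int: "integrable lborel f" and B: "\<And>t. \<bar>f t\<bar> \<le> B"
  shows "((\<lambda>\<epsilon>. \<integral>t. indicator {t. \<epsilon> < \<bar>t\<bar>} t * f t \<partial>lborel) \<longlongrightarrow> integral\<^sup>L lborel f) (at_right 0)"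
proof -
  have bnd: "\<bar>(\<integral>t. indicator {t. \<epsilon> < \<bar>t\<bar>} t * f t \<partial>lborel) - integral\<^sup>L lborel f\<bar> \<le> 2 * \<epsilon> * B"
    if e: "\<epsilon> > 0" for \<epsilon>
  proof -
    have s1: "{t::real. \<epsilon> < \<bar>t\<bar>} \<in> sets lborel" by measurable
    have i1: "integrable lborel (\<lambda>t. indicator {t. \<epsilon> < \<bar>t\<bar>} t * f t)"
      using integrable_real_mult_indicator[OF s1 int] by (simp add: mult.commute)
    have "(\<integral>t. indicator {t. \<epsilon> < \<bar>t\<bar>} t * f t \<partial>lborel) - integral\<^sup>L lborel f
        = (\<integral>t. indicator {t. \<epsilon> < \<bar>t\<bar>} t * f t - f t \<partial>lborel)"
      using i1 int by (rule Bochner_Integration.integral_diff[symmetric])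
    also have "\<dots> = (\<integral>t. - (indicator {-\<epsilon>..\<epsilon>} t * f t) \<partial>lborel)"
      by (rule Bochner_Integration.integral_cong) (auto simp: indicator_def)
    finally have eq: "(\<integral>t. indicator {t. \<epsilon> < \<bar>t\<bar>} t * f t \<partial>lborel) - integral\<^sup>L lborel f
        = - (\<integral>t. indicator {-\<epsilon>..\<epsilon>} t * f t \<partial>lborel)" by simp
    have "\<bar>\<integral>t. indicator {-\<epsilon>..\<epsilon>} t * f t \<partial>lborel\<bar> \<le> 2 * \<epsilon> * B"
    proof (rule abs_int_ind_bound)
      fix t show "\<bar>indicator {-\<epsilon>..\<epsilon>} t * f t\<bar> \<le> B * indicator {-\<epsilon>..\<epsilon>} t"
        using B[of t] by (auto simp: indicator_def)
    qed (use e in simp)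
    then show ?thesis unfolding eq by simp
  qed
  have "((\<lambda>\<epsilon>. (\<integral>t. indicator {t. \<epsilon> < \<bar>t\<bar>} t * f t \<partial>lborel) - integral\<^sup>L lborel f) \<longlongrightarrow> 0) (at_right 0)"
  proof (rule Lim_null_comparison)
    show "\<forall>\<^sub>F \<epsilon> in at_right 0. norm ((\<integral>t. indicator {t. \<epsilon> < \<bar>t\<bar>} t * f t \<partial>lborel) - integral\<^sup>L lborel f) \<le> 2 * \<epsilon> * B"
      unfolding real_norm_def using bnd eventually_at_right_less[of 0] by (rule eventually_mono[rotated]) 
    have "((\<lambda>\<epsilon>::real. 2 * \<epsilon> * B) \<longlongrightarrow> 2 * 0 * B) (at_right 0)"
      by (intro tendsto_intros)
    then show "((\<lambda>\<epsilon>::real. 2 * \<epsilon> * B) \<longlongrightarrow> 0) (at_right 0)" by simp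
  qed
  then show ?thesis by (simp add: LIM_zero_iff)
qed



locale kir =
  fixes \<Phi> :: "real \<times> real \<Rightarrow> real" and R M L :: real
  assumes cont: "continuous_on UNIV \<Phi>"
    and supp: "\<forall>p. \<Phi> p \<noteq> 0 \<longrightarrow> norm p \<le> R"
    and bdd: "\<forall>p. \<bar>\<Phi> p\<bar> \<le> M"
    and lip: "\<forall>x y z. \<bar>\<Phi>(x,y) - \<Phi>(x,z)\<bar> \<le> L * \<bar>y - z\<bar>"
    and L0: "0 \<le> L" and R0: "0 < R"
begin

definition E :: "real \<Rightarrow> real \<Rightarrow> real" where
  "E x t = (\<Phi>(x,x-t) - \<Phi>(x,x+t)) / (2*t)"

definition I :: "real \<Rightarrow> real" where
  "I x = (\<integral>t. E x t \<partial>lborel)"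

lemma meas_borel: "\<Phi> \<in> borel_measurable borel"
  using cont by (rule borel_measurable_continuous_onI)

lemma meas_pair [measurable]: "\<Phi> \<in> borel_measurable (lborel \<Otimes>\<^sub>M lborel)"
  using meas_borel by (simp add: lborel_prod)

lemma nz: "\<Phi>(x,y) \<noteq> 0 \<Longrightarrow> \<bar>x\<bar> \<le> R \<and> \<bar>y\<bar> \<le> R"
proof -
  assume "\<Phi>(x,y) \<noteq> 0"
  then have "norm (x,y) \<le> R" using supp by blast
  moreover have "\<bar>x\<bar> \<le> norm (x,y)" "\<bar>y\<bar> \<le> norm (x,y)"
    using norm_fst_le[of x y] norm_snd_le[of y x] by auto
  ultimately show ?thesis by linarith
qed

lemma kint_meas: "(\<lambda>y. indicator {y. \<epsilon> < \<bar>x-y\<bar>} y * (\<Phi>(x,y)/(x-y))) \<in> borel_measurable lborel"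
proof -
  have [measurable]: "\<Phi> \<in> borel_measurable borel" by (rule meas_borel)
  show ?thesis by simp measurable
qed

lemma kint: assumes e: "\<epsilon> > 0"
  shows "integrable lborel (\<lambda>y. indicator {y. \<epsilon> < \<bar>x-y\<bar>} y * (\<Phi>(x,y)/(x-y)))"
proof (rule int_bounded[OF kint_meas])
  fix y
  show "\<bar>indicator {y. \<epsilon> < \<bar>x-y\<bar>} y * (\<Phi>(x,y)/(x-y))\<bar> \<le> M / \<epsilon>"
  proof (cases "\<epsilon> < \<bar>x-y\<bar>")
    case True
    have "\<bar>\<Phi>(x,y)/(x-y)\<bar> = \<bar>\<Phi>(x,y)\<bar> / \<bar>x-y\<bar>" by (simp add: abs_divide)
    also have "\<dots> \<le> M / \<bar>x-y\<bar>" using bdd True e by (intro divide_right_mono) auto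
    also have "\<dots> \<le> M / \<epsilon>" using bdd True e
      by (intro divide_left_mono) (auto intro: order_trans[OF abs_ge_zero])
    finally show ?thesis using True by simp
  next
    case False
    have "0 \<le> M" using bdd by (meson abs_ge_zero order_trans)
    then show ?thesis using False e by simp
  qed
next
  fix y assume "indicator {y. \<epsilon> < \<bar>x-y\<bar>} y * (\<Phi>(x,y)/(x-y)) \<noteq> 0"
  then have "\<Phi>(x,y) \<noteq> 0" by auto
  then show "norm y \<le> R" using nz by auto
qed

lemma F_leb: assumes e: "\<epsilon> > 0"
  shows "integral {y. \<epsilon> < \<bar>x-y\<bar>} (\<lambda>y. \<Phi>(x,y)/(x-y))
       = (\<integral>y. indicator {y. \<epsilon> < \<bar>x-y\<bar>} y * (\<Phi>(x,y)/(x-y)) \<partial>lborel)"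
proof -
  have "integral {y. \<epsilon> < \<bar>x-y\<bar>} (\<lambda>y. \<Phi>(x,y)/(x-y))
      = integral UNIV (\<lambda>y. if y \<in> {y. \<epsilon> < \<bar>x-y\<bar>} then \<Phi>(x,y)/(x-y) else 0)"
    by (rule integral_restrict_UNIV[symmetric])
  also have "\<dots> = integral UNIV (\<lambda>y. indicator {y. \<epsilon> < \<bar>x-y\<bar>} y * (\<Phi>(x,y)/(x-y)))"
    by (rule Henstock_Kurzweil_Integration.integral_cong) (simp add: indicator_def)
  also have "\<dots> = (\<integral>y. indicator {y. \<epsilon> < \<bar>x-y\<bar>} y * (\<Phi>(x,y)/(x-y)) \<partial>lborel)"
    using kint[OF e] by (rule integral_lborel)
  finally show ?thesis .
qed

lemma E_bound: "\<bar>E x t\<bar> \<le> L"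
proof (cases "t = 0")
  case True then show ?thesis using L0 by (simp add: E_def)
next
  case False
  have "\<bar>\<Phi>(x,x-t) - \<Phi>(x,x+t)\<bar> \<le> L * \<bar>(x-t) - (x+t)\<bar>" using lip by blast
  also have "\<dots> = L * \<bar>2*t\<bar>" by simp
  finally have "\<bar>\<Phi>(x,x-t) - \<Phi>(x,x+t)\<bar> / \<bar>2*t\<bar> \<le> L" using False by (simp add: divide_le_eq)
  then show ?thesis by (simp add: E_def abs_divide)
qed

lemma E_supp: "\<bar>t\<bar> > 2*R \<Longrightarrow> E x t = 0"
proof -
  assume t: "\<bar>t\<bar> > 2*R"
  have "\<Phi>(x,x-t) = 0"
  proof (rule ccontr)
    assume "\<Phi>(x,x-t) \<noteq> 0" then have "\<bar>x\<bar> \<le> R \<and> \<bar>x-t\<bar> \<le> R" by (rule nz)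
    then show False using t by linarith
  qed
  moreover have "\<Phi>(x,x+t) = 0"
  proof (rule ccontr)
    assume "\<Phi>(x,x+t) \<noteq> 0" then have "\<bar>x\<bar> \<le> R \<and> \<bar>x+t\<bar> \<le> R" by (rule nz)
    then show False using t by linarith
  qed
  ultimately show ?thesis by (simp add: E_def)
qed

lemma E_supp_x: "\<bar>x\<bar> > R \<Longrightarrow> E x t = 0"
proof -
  assume x: "\<bar>x\<bar> > R"
  have "\<Phi>(x,y) = 0" for y using nz[of x y] x by linarith
  then show ?thesis by (simp add: E_def)
qed

lemma E_meas2 [measurable]: "(\<lambda>(x,t). E x t) \<in> borel_measurable (lborel \<Otimes>\<^sub>M lborel)"
  unfolding E_def by measurable

lemma E_meas: "E x \<in> borel_measurable lborel"
proof -
  have [measurable]: "\<Phi> \<in> borel_measurable borel" by (rule meas_borel)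
  show ?thesis unfolding E_def by simp measurable
qed

lemma E_ind: "\<bar>E x t\<bar> \<le> L * indicator {-(2*R)..2*R} t"
  using E_bound[of x t] E_supp[of t x] by (cases "\<bar>t\<bar> \<le> 2*R") (auto simp: indicator_def)

lemma E_int: "integrable lborel (E x)"
proof (rule int_bounded[OF E_meas])
  show "\<bar>E x t\<bar> \<le> L" for t by (rule E_bound)
  show "norm t \<le> 2*R" if "E x t \<noteq> 0" for t using E_supp[of t x] that by force
qed

end

context kir begin

lemma F_E: assumes e: "\<epsilon> > 0"
  shows "(\<integral>y. indicator {y. \<epsilon> < \<bar>x-y\<bar>} y * (\<Phi>(x,y)/(x-y)) \<partial>lborel)
       = (\<integral>t. indicator {t. \<epsilon> < \<bar>t\<bar>} t * E x t \<partial>lborel)"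
proof -
  define k where "k y = indicator {y. \<epsilon> < \<bar>x-y\<bar>} y * (\<Phi>(x,y)/(x-y))" for y
  have ki: "integrable lborel k" unfolding k_def by (rule kint[OF e])
  define k1 where "k1 t = indicator {t. \<epsilon> < \<bar>t\<bar>} t * (\<Phi>(x,x-t)/t)" for t
  define k2 where "k2 t = indicator {t. \<epsilon> < \<bar>t\<bar>} t * (\<Phi>(x,x+t)/(-t))" for t
  have k1e: "k (x + (-1) * t) = k1 t" for t unfolding k_def k1_def by (simp add: indicator_def)
  have k2e: "k (x + 1 * t) = k2 t" for t unfolding k_def k2_def by (simp add: indicator_def)
  have i1: "integrable lborel k1"
    using lborel_integrable_real_affine[OF ki, of "-1" x] k1e by simp
  have i2: "integrable lborel k2"
    using lborel_integrable_real_affine[OF ki, of 1 x] k2e by simp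
  have e1: "integral\<^sup>L lborel k = integral\<^sup>L lborel k1"
    using lborel_integral_real_affine[of "-1" k x] k1e by simp
  have e2: "integral\<^sup>L lborel k = integral\<^sup>L lborel k2"
    using lborel_integral_real_affine[of 1 k x] k2e by simp
  have "integral\<^sup>L lborel k = (integral\<^sup>L lborel k1 + integral\<^sup>L lborel k2) / 2"
    using e1 e2 by simp
  also have "\<dots> = (\<integral>t. (k1 t + k2 t) / 2 \<partial>lborel)"
    using i1 i2 by (simp add: Bochner_Integration.integral_add)
  also have "\<dots> = (\<integral>t. indicator {t. \<epsilon> < \<bar>t\<bar>} t * E x t \<partial>lborel)"
  proof (rule Bochner_Integration.integral_cong[OF refl])
    fix t
    show "(k1 t + k2 t) / 2 = indicator {t. \<epsilon> < \<bar>t\<bar>} t * E x t"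
    proof (cases "\<epsilon> < \<bar>t\<bar>")
      case True
      then have "t \<noteq> 0" using e by auto
      then show ?thesis using True unfolding k1_def k2_def E_def
        by (simp add: field_simps)
    next
      case False then show ?thesis unfolding k1_def k2_def by simp
    qed
  qed
  finally show ?thesis unfolding k_def .
qed

lemma F_tendsto: "((\<lambda>\<epsilon>. integral {y. \<epsilon> < \<bar>x-y\<bar>} (\<lambda>y. \<Phi>(x,y)/(x-y))) \<longlongrightarrow> I x) (at_right 0)"
proof -
  have "((\<lambda>\<epsilon>. \<integral>t. indicator {t. \<epsilon> < \<bar>t\<bar>} t * E x t \<partial>lborel) \<longlongrightarrow> I x) (at_right 0)"
    unfolding I_def by (rule trunc_tendsto[OF E_int E_bound])
  moreover have "\<forall>\<^sub>F \<epsilon> in at_right 0. (\<integral>t. indicator {t. \<epsilon> < \<bar>t\<bar>} t * E x t \<partial>lborel)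
       = integral {y. \<epsilon> < \<bar>x-y\<bar>} (\<lambda>y. \<Phi>(x,y)/(x-y))"
    using eventually_at_right_less[of "0::real"]
    by (rule eventually_mono) (simp only: F_leb F_E)
  ultimately show ?thesis by (rule Lim_transform_eventually)
qed

lemma hilbert_I: "hilbert_y \<Phi> x x = I x"
  unfolding hilbert_y_def by (rule tendsto_Lim[OF trivial_limit_at_right_real F_tendsto])

lemma I_bound: "\<bar>I x\<bar> \<le> 4 * R * L"
proof -
  have "R \<ge> 0" using R0 by simp
  then have "\<bar>I x\<bar> \<le> 2 * (2*R) * L" unfolding I_def
    by (intro abs_int_ind_bound E_ind) simp
  then show ?thesis by simp
qed

lemma I_supp: "\<bar>x\<bar> > R \<Longrightarrow> I x = 0"
proof -
  assume "\<bar>x\<bar> > R"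
  then have "E x = (\<lambda>t. 0)" using E_supp_x by auto
  then show ?thesis unfolding I_def by simp
qed

lemma I_meas [measurable]: "I \<in> borel_measurable lborel"
  unfolding I_def by (rule lborel.borel_measurable_lebesgue_integral) (rule E_meas2)

end

context kir begin

lemma part2: "((\<lambda>\<epsilon>. Kir_eps \<epsilon> \<Phi> x) \<longlongrightarrow> x * hilbert_y \<Phi> x x) (at_right 0)"
proof (cases "x = 0")
  case True
  have "Kir_eps \<epsilon> \<Phi> x = 0" for \<epsilon> unfolding Kir_eps_def True by simp
  then show ?thesis using True by simp
next
  case False
  have "((\<lambda>\<epsilon>. x * integral {y. \<epsilon> < \<bar>x-y\<bar>} (\<lambda>y. \<Phi>(x,y)/(x-y))) \<longlongrightarrow> x * I x) (at_right 0)"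
    by (intro tendsto_mult_left F_tendsto)
  moreover have "\<forall>\<^sub>F \<epsilon> in at_right 0. x * integral {y. \<epsilon> < \<bar>x-y\<bar>} (\<lambda>y. \<Phi>(x,y)/(x-y)) = Kir_eps \<epsilon> \<Phi> x"
  proof -
    have "\<bar>x\<bar> > 0" using False by simp
    moreover have "\<forall>\<epsilon>>0. \<epsilon> < \<bar>x\<bar> \<longrightarrow> x * integral {y. \<epsilon> < \<bar>x-y\<bar>} (\<lambda>y. \<Phi>(x,y)/(x-y)) = Kir_eps \<epsilon> \<Phi> x"
      unfolding Kir_eps_def by (auto simp: indicator_def)
    ultimately show ?thesis by (subst eventually_at_right[OF zero_less_one]) blast
  qed
  ultimately show ?thesis unfolding hilbert_I by (rule Lim_transform_eventually)
qed

lemma part3: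
  fixes \<phi> :: "real \<Rightarrow> real"
  assumes tf: "test_fun \<phi>"
  shows "pv_recip (\<lambda>x. \<phi> x * (x * hilbert_y \<Phi> x x)) = S_pair (\<lambda>(x, y). \<phi> x * \<Phi> (x, y))"
proof -
  obtain R1 where R1: "\<forall>p. \<phi> p \<noteq> 0 \<longrightarrow> norm p \<le> R1" using test_fun_supp[OF tf] by blast
  obtain M1 where M1: "\<forall>p. \<bar>\<phi> p\<bar> \<le> M1" using test_fun_bdd[OF tf] by blast
  have M10: "0 \<le> M1" using M1 by (meson abs_ge_zero order_trans)
  have "\<phi> \<in> borel_measurable borel" using test_fun_cont[OF tf] by (rule borel_measurable_continuous_onI)
  then have [measurable]: "\<phi> \<in> borel_measurable lborel" by simp
  define g where "g x = \<phi> x * I x" for x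
  have gm: "g \<in> borel_measurable lborel" unfolding g_def by measurable
  have gb: "\<bar>g x\<bar> \<le> M1 * (4 * R * L)" for x
    unfolding g_def abs_mult using M1 I_bound M10 by (intro mult_mono) auto
  have gi: "integrable lborel g"
  proof (rule int_bounded[OF gm gb])
    fix x assume "g x \<noteq> 0" then have "\<phi> x \<noteq> 0" unfolding g_def by auto
    then show "norm x \<le> R1" using R1 by blast
  qed
  have pv_eq: "integral {x. \<epsilon> < \<bar>x\<bar>} (\<lambda>x. \<phi> x * (x * hilbert_y \<Phi> x x) / x)
      = (\<integral>t. indicator {t. \<epsilon> < \<bar>t\<bar>} t * g t \<partial>lborel)" if e: "\<epsilon> > 0" for \<epsilon>
  proof -
    have s1: "{t::real. \<epsilon> < \<bar>t\<bar>} \<in> sets lborel" by measurable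
    have i1: "integrable lborel (\<lambda>t. indicator {t. \<epsilon> < \<bar>t\<bar>} t * g t)"
      using integrable_real_mult_indicator[OF s1 gi] by (simp add: mult.commute)
    have "integral {x. \<epsilon> < \<bar>x\<bar>} (\<lambda>x. \<phi> x * (x * hilbert_y \<Phi> x x) / x) = integral {x. \<epsilon> < \<bar>x\<bar>} g"
    proof (rule Henstock_Kurzweil_Integration.integral_cong)
      fix x assume "x \<in> {x. \<epsilon> < \<bar>x\<bar>}"
      then have "x \<noteq> 0" using e by auto
      then show "\<phi> x * (x * hilbert_y \<Phi> x x) / x = g x" unfolding g_def hilbert_I by simp
    qed
    also have "\<dots> = integral UNIV (\<lambda>t. if t \<in> {t. \<epsilon> < \<bar>t\<bar>} then g t else 0)"
      by (rule integral_restrict_UNIV[symmetric])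
    also have "\<dots> = integral UNIV (\<lambda>t. indicator {t. \<epsilon> < \<bar>t\<bar>} t * g t)"
      by (rule Henstock_Kurzweil_Integration.integral_cong) (simp add: indicator_def)
    also have "\<dots> = (\<integral>t. indicator {t. \<epsilon> < \<bar>t\<bar>} t * g t \<partial>lborel)"
      using i1 by (rule integral_lborel)
    finally show ?thesis .
  qed
  have "((\<lambda>\<epsilon>. integral {x. \<epsilon> < \<bar>x\<bar>} (\<lambda>x. \<phi> x * (x * hilbert_y \<Phi> x x) / x)) \<longlongrightarrow> integral\<^sup>L lborel g) (at_right 0)"
  proof (rule Lim_transform_eventually[OF trunc_tendsto[OF gi gb]])
    show "\<forall>\<^sub>F \<epsilon> in at_right 0. (\<integral>t. indicator {t. \<epsilon> < \<bar>t\<bar>} t * g t \<partial>lborel)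
       = integral {x. \<epsilon> < \<bar>x\<bar>} (\<lambda>x. \<phi> x * (x * hilbert_y \<Phi> x x) / x)"
      using eventually_at_right_less[of "0::real"] by (rule eventually_mono) (simp only: pv_eq)
  qed
  then have pv: "pv_recip (\<lambda>x. \<phi> x * (x * hilbert_y \<Phi> x x)) = integral\<^sup>L lborel g"
    unfolding pv_recip_def by (rule tendsto_Lim[OF trivial_limit_at_right_real])
  have hy: "hilbert_y (\<lambda>(x, y). \<phi> x * \<Phi> (x, y)) x x = g x" for x
  proof -
    have "integral {y. \<epsilon> < \<bar>x-y\<bar>} (\<lambda>y. (\<lambda>(x, y). \<phi> x * \<Phi> (x, y)) (x, y) / (x - y))
        = \<phi> x * integral {y. \<epsilon> < \<bar>x-y\<bar>} (\<lambda>y. \<Phi>(x,y)/(x-y))" for \<epsilon>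
    proof -
      have "(\<lambda>y. (\<lambda>(x, y). \<phi> x * \<Phi> (x, y)) (x, y) / (x - y)) = (\<lambda>y. \<phi> x * (\<Phi>(x,y)/(x-y)))"
        by simp
      then show ?thesis by (simp only: integral_mult_right)
    qed
    moreover have "((\<lambda>\<epsilon>. \<phi> x * integral {y. \<epsilon> < \<bar>x-y\<bar>} (\<lambda>y. \<Phi>(x,y)/(x-y))) \<longlongrightarrow> g x) (at_right 0)"
      unfolding g_def by (intro tendsto_mult_left F_tendsto)
    ultimately show ?thesis unfolding hilbert_y_def
      by (intro tendsto_Lim[OF trivial_limit_at_right_real]) simp
  qed
  have "S_pair (\<lambda>(x, y). \<phi> x * \<Phi> (x, y)) = integral UNIV g"
    unfolding S_pair_def hy ..
  also have "\<dots> = integral\<^sup>L lborel g" using gi by (rule integral_lborel)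
  finally show ?thesis using pv by simp
qed

end

context kir begin

lemma part1:
  fixes \<phi> :: "real \<Rightarrow> real"
  assumes e: "\<epsilon> > 0" and tf: "test_fun \<phi>"
  shows "T_eps \<epsilon> (\<lambda>x. \<phi> x * Kir_eps \<epsilon> \<Phi> x) = S_eps \<epsilon> (\<lambda>(x, y). \<phi> x * \<Phi> (x, y))"
proof -
  obtain M1 where M1: "\<forall>p. \<bar>\<phi> p\<bar> \<le> M1" using test_fun_bdd[OF tf] by blast
  have M10: "0 \<le> M1" using M1 by (meson abs_ge_zero order_trans)
  have M0: "0 \<le> M" using bdd by (meson abs_ge_zero order_trans)
  have "\<phi> \<in> borel_measurable borel" using test_fun_cont[OF tf] by (rule borel_measurable_continuous_onI)
  then have [measurable]: "\<phi> \<in> borel_measurable lborel" by simp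
  define F where "F x = integral {y. \<epsilon> < \<bar>x-y\<bar>} (\<lambda>y. \<Phi>(x,y)/(x-y))" for x
  define G where "G p = indicator {p. \<epsilon> < \<bar>fst p - snd p\<bar>} p * (\<phi> (fst p) * \<Phi> p / (fst p - snd p))" for p
  have Gm2: "G \<in> borel_measurable (lborel \<Otimes>\<^sub>M lborel)" unfolding G_def by measurable
  then have Gm: "G \<in> borel_measurable lborel" by (simp add: lborel_prod)
  have Gi: "integrable lborel G"
  proof (rule int_bounded[OF Gm])
    fix p :: "real \<times> real"
    show "\<bar>G p\<bar> \<le> M1 * M / \<epsilon>"
    proof (cases "\<epsilon> < \<bar>fst p - snd p\<bar>")
      case True
      have "\<bar>\<phi> (fst p) * \<Phi> p / (fst p - snd p)\<bar> = \<bar>\<phi> (fst p)\<bar> * \<bar>\<Phi> p\<bar> / \<bar>fst p - snd p\<bar>"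
        by (simp add: abs_divide abs_mult)
      also have "\<dots> \<le> M1 * M / \<bar>fst p - snd p\<bar>" using bdd[rule_format, of p] M1[rule_format, of "fst p"] True e M10
        by (intro divide_right_mono mult_mono) auto
      also have "\<dots> \<le> M1 * M / \<epsilon>" using True e M0 M10
        by (intro divide_left_mono) auto
      finally show ?thesis using True unfolding G_def by simp
    next
      case False then show ?thesis using M0 M10 e unfolding G_def by simp
    qed
  next
    fix p :: "real \<times> real" assume "G p \<noteq> 0"
    then have "\<Phi> p \<noteq> 0" unfolding G_def by auto
    then show "norm p \<le> R" using supp by blast
  qed
  then have Gi2: "integrable (lborel \<Otimes>\<^sub>M lborel) G" by (simp add: lborel_prod)
  have inner: "(\<integral>y. G (x,y) \<partial>lborel) = \<phi> x * F x" for x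
  proof -
    have "(\<integral>y. G (x,y) \<partial>lborel) = (\<integral>y. \<phi> x * (indicator {y. \<epsilon> < \<bar>x-y\<bar>} y * (\<Phi>(x,y)/(x-y))) \<partial>lborel)"
      by (rule Bochner_Integration.integral_cong[OF refl]) (simp add: G_def indicator_def)
    also have "\<dots> = \<phi> x * (\<integral>y. indicator {y. \<epsilon> < \<bar>x-y\<bar>} y * (\<Phi>(x,y)/(x-y)) \<partial>lborel)"
      by (rule integral_mult_right_zero)
    also have "\<dots> = \<phi> x * F x" unfolding F_def using F_leb[OF e] by simp
    finally show ?thesis .
  qed
  have fi: "integrable lborel (\<lambda>x. \<phi> x * F x)"
    using pair_sigma_finite.integrable_fst'[OF lborel_pair.pair_sigma_finite_axioms Gi2]
    unfolding inner .
  have fub: "(\<integral>x. \<phi> x * F x \<partial>lborel) = integral\<^sup>L (lborel \<Otimes>\<^sub>M lborel) G"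
    using pair_sigma_finite.integral_fst'[OF lborel_pair.pair_sigma_finite_axioms Gi2]
    unfolding inner .
  have "S_eps \<epsilon> (\<lambda>(x, y). \<phi> x * \<Phi> (x, y))
      = integral UNIV (\<lambda>p. if p \<in> {p. \<epsilon> < \<bar>fst p - snd p\<bar>} then (\<lambda>(x, y). \<phi> x * \<Phi> (x, y)) p / (fst p - snd p) else 0)"
    unfolding S_eps_def by (rule integral_restrict_UNIV[symmetric])
  also have "\<dots> = integral UNIV G"
    by (rule Henstock_Kurzweil_Integration.integral_cong) (auto simp: G_def indicator_def split: prod.splits)
  also have "\<dots> = integral\<^sup>L lborel G" using Gi by (rule integral_lborel)
  also have "\<dots> = (\<integral>x. \<phi> x * F x \<partial>lborel)" using fub by (simp add: lborel_prod)
  finally have S: "S_eps \<epsilon> (\<lambda>(x, y). \<phi> x * \<Phi> (x, y)) = (\<integral>x. \<phi> x * F x \<partial>lborel)" .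
  have pt: "h_eps \<epsilon> x * (\<phi> x * Kir_eps \<epsilon> \<Phi> x) = \<phi> x * F x" if x: "x \<noteq> 0" for x
  proof (cases "\<epsilon> < \<bar>x\<bar>")
    case True
    then have "h_eps \<epsilon> x = 1 / x" unfolding h_eps_def by (auto simp: indicator_def)
    moreover have "Kir_eps \<epsilon> \<Phi> x = x * F x" using True unfolding Kir_eps_def F_def by (auto simp: indicator_def)
    ultimately show ?thesis using x by simp
  next
    case False
    then have h: "h_eps \<epsilon> x = sgn x / \<epsilon>" unfolding h_eps_def by (auto simp: indicator_def)
    have k: "Kir_eps \<epsilon> \<Phi> x = \<epsilon> * sgn x * F x" using False unfolding Kir_eps_def F_def by (auto simp: indicator_def)
    have s: "sgn x * sgn x = (1::real)" using x by (cases "x > 0") auto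
    have "h_eps \<epsilon> x * (\<phi> x * Kir_eps \<epsilon> \<Phi> x) = (sgn x / \<epsilon>) * (\<phi> x * (\<epsilon> * sgn x * F x))"
      by (simp only: h k)
    also have "\<dots> = (sgn x * sgn x) * (\<phi> x * F x)" using e by simp
    also have "\<dots> = \<phi> x * F x" using s by simp
    finally show ?thesis .
  qed
  have "T_eps \<epsilon> (\<lambda>x. \<phi> x * Kir_eps \<epsilon> \<Phi> x) = integral UNIV (\<lambda>x. \<phi> x * F x)"
    unfolding T_eps_def
  proof (rule integral_spike[of "{0}"])
    show "negligible {0::real}" by simp
    fix x assume "x \<in> UNIV - {0::real}"
    then have "x \<noteq> 0" by simp
    from pt[OF this] show "\<phi> x * F x = h_eps \<epsilon> x * (\<phi> x * Kir_eps \<epsilon> \<Phi> x)" by (rule sym)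
  qed
  also have "\<dots> = (\<integral>x. \<phi> x * F x \<partial>lborel)" using fi by (rule integral_lborel)
  finally show ?thesis using S by simp
qed

end

theorem proposition9p2:
  fixes \<Phi> :: "real \<times> real \<Rightarrow> real"
  assumes "test_fun \<Phi>"
  shows "(\<forall>\<epsilon>>0. \<forall>\<phi>::real \<Rightarrow> real. test_fun \<phi> \<longrightarrow>
            T_eps \<epsilon> (\<lambda>x. \<phi> x * Kir_eps \<epsilon> \<Phi> x) = S_eps \<epsilon> (\<lambda>(x, y). \<phi> x * \<Phi> (x, y)))
       \<and> (\<forall>x. ((\<lambda>\<epsilon>. Kir_eps \<epsilon> \<Phi> x) \<longlongrightarrow> x * hilbert_y \<Phi> x x) (at_right 0))
       \<and> (\<forall>\<phi>::real \<Rightarrow> real. test_fun \<phi> \<longrightarrow>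
            pv_recip (\<lambda>x. \<phi> x * (x * hilbert_y \<Phi> x x)) = S_pair (\<lambda>(x, y). \<phi> x * \<Phi> (x, y)))"
proof -
  note tf = assms
  obtain R where R0: "R > 0" and R: "\<forall>p. \<Phi> p \<noteq> 0 \<longrightarrow> norm p \<le> R"
    using test_fun_supp[OF tf] by blast
  obtain M where M: "\<forall>p. \<bar>\<Phi> p\<bar> \<le> M" using test_fun_bdd[OF tf] by blast
  have "Ck (Suc 0) \<Phi>" using tf unfolding test_fun_def smooth_def by blast
  then obtain f' where d: "\<forall>p. (\<Phi> has_derivative f' p) (at p)" and c: "\<forall>v. Ck 0 (\<lambda>p. f' p v)"
    by auto
  define g where "g p = f' p (0,1)" for p
  have gc: "continuous_on UNIV g" using c unfolding g_def by simp
  have dd: "((\<lambda>y. \<Phi>(x,y)) has_real_derivative g (x,y)) (at y)" for x y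
    unfolding g_def by (rule partial_deriv[OF d])
  obtain L where L0: "L \<ge> 0" and L: "\<forall>x y z. \<bar>\<Phi>(x,y) - \<Phi>(x,z)\<bar> \<le> L * \<bar>y - z\<bar>"
    using lip_y[OF dd gc R] by blast
  interpret kir \<Phi> R M L
    using test_fun_cont[OF tf] R M L L0 R0 by unfold_locales auto
  show ?thesis using part1 part2 part3 by blast
qed

end
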